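(* Let $G_n$ be a random $d$-regular multigraph on $n$ vertices (configuration model), with $d$ fixed and independent of $n$. Assume the strong external infection regime $0<\kappa<\frac{1}{4(n-1)^2}$, $a>1-\frac{1}{n^\alpha}>1-\kappa>\frac12$ for some $\alpha>1$, and additionally $\lambda\le\frac{1}{dn^\alpha}$. Let $t^{(n)}_{\mathrm{mix}}(\epsilon)$ be the mixing time of the noisy SIS model run on the realized multigraph. Then for every fixed $\epsilon\in(0,1)$ there is a sequence $\delta_n\to0$ such that for every $\epsilon'>0$ and all $n$ large enough, $$\mathbf{P}\Big(\tfrac{n}{2}\log n\,(1-\delta_n)\le t^{(n)}_{\mathrm{mix}}(\epsilon)\le 2n\log n\,(1+\delta_n)\Big)\ge1-\epsilon',$$ where $\mathbf{P}$ is the law of the random multigraph.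
   Context: Configuration model for a random $d$-regular multigraph ($dn$ even): each of the $n$ vertices receives $d$ half-edges; the $dn$ half-edges are paired uniformly at random, each pair forming an edge; self-loops and multiple edges are allowed. The state space is $\Omega_n=\{0,1\}^{V_n}$. For $\sigma\in\Omega_n$, $x\in V_n$, let $n_{I,\sigma}(x)=\#\{e\in E_n: e=(x,y),\ x\ne y,\ \sigma_y=1\}$ (edges counted with multiplicity, self-loops excluded), and $\Delta^{(n)}_{\max}$ the maximal degree. Fix $a,\lambda,\kappa>0$ (may depend on $n$), put $p(\sigma,x)=a+\lambda\, n_{I,\sigma}(x)$. The noisy SIS model is the discrete-time Markov chain on $\Omega_n$ in which, at each step, a vertex $x$ is chosen uniformly at random and only its state may change: if $\sigma_x=0$ it becomes $1$ with probability $p(\sigma,x)$ and stays $0$ otherwise; if $\sigma_x=1$ it becomes $0$ with probability $\kappa$ and stays $1$ otherwise. It has unique stationary distribution $\mu^n_{a,\lambda,\kappa}$. With $\mu^n_{\eta_0,t}$ the law at time $t$ from $\eta_0$ and $d_{TV}$ total variation distance, $d^{(n)}(t)=\sup_{\eta_0}d_{TV}(\mu^n_{\eta_0,t},\mu^n_{a,\lambda,\kappa})$ and $t^{(n)}_{\mathrm{mix}}(\epsilon)=\inf\{t\ge0:d^{(n)}(t)\le\epsilon\}$. *)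

theory Defs
  imports "HOL-Probability.Probability_Mass_Function"
begin

text \<open>Vertices are 0..n-1, half-edges are 0..d*n-1, half-edge h
  belongs to vertex h div d. A pairing is a fixed-point-free involution of the half-edges
  (extended by the identity outside).\<close>

definition pairings :: "nat \<Rightarrow> nat \<Rightarrow> (nat \<Rightarrow> nat) set" where
  "pairings d n = {f. (\<forall>h<d*n. f h < d*n \<and> f h \<noteq> h \<and> f (f h) = h) \<and> (\<forall>h\<ge>d*n. f h = h)}"

definition config_model :: "nat \<Rightarrow> nat \<Rightarrow> (nat \<Rightarrow> nat) pmf" where
  "config_model d n = pmf_of_set (pairings d n)"

text \<open>Number of infected neighbours of x (edges with multiplicity, self-loops excluded):
  each edge x--y with y \<noteq> x corresponds to exactly one half-edge h at x with partner at y.\<close>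
definition nI :: "nat \<Rightarrow> nat \<Rightarrow> (nat \<Rightarrow> nat) \<Rightarrow> (nat \<Rightarrow> bool) \<Rightarrow> nat \<Rightarrow> nat" where
  "nI d n f \<sigma> x = card {h. h < d*n \<and> h div d = x \<and> f h div d \<noteq> x \<and> \<sigma> (f h div d)}"

definition states :: "nat \<Rightarrow> (nat \<Rightarrow> bool) set" where
  "states n = {\<sigma>. \<forall>x\<ge>n. \<sigma> x = False}"

definition infp :: "nat \<Rightarrow> nat \<Rightarrow> (nat \<Rightarrow> nat) \<Rightarrow> real \<Rightarrow> real \<Rightarrow> (nat \<Rightarrow> bool) \<Rightarrow> nat \<Rightarrow> real" where
  "infp d n f a lam \<sigma> x = min 1 (a + lam * real (nI d n f \<sigma> x))"

definition site_step :: "nat \<Rightarrow> nat \<Rightarrow> (nat \<Rightarrow> nat) \<Rightarrow> real \<Rightarrow> real \<Rightarrow> real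
    \<Rightarrow> nat \<Rightarrow> (nat \<Rightarrow> bool) \<Rightarrow> (nat \<Rightarrow> bool) \<Rightarrow> real" where
  "site_step d n f a lam kap x \<sigma> \<tau> =
     (if \<sigma> x then (if \<tau> = \<sigma>(x := False) then kap else 0) + (if \<tau> = \<sigma> then 1 - kap else 0)
      else (if \<tau> = \<sigma>(x := True) then infp d n f a lam \<sigma> x else 0)
           + (if \<tau> = \<sigma> then 1 - infp d n f a lam \<sigma> x else 0))"

definition sis_P :: "nat \<Rightarrow> nat \<Rightarrow> (nat \<Rightarrow> nat) \<Rightarrow> real \<Rightarrow> real \<Rightarrow> real
    \<Rightarrow> (nat \<Rightarrow> bool) \<Rightarrow> (nat \<Rightarrow> bool) \<Rightarrow> real" where
  "sis_P d n f a lam kap \<sigma> \<tau> = (\<Sum>x<n. site_step d n f a lam kap x \<sigma> \<tau>) / real n"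

primrec chain_dist :: "('s \<Rightarrow> 's \<Rightarrow> real) \<Rightarrow> 's set \<Rightarrow> 's \<Rightarrow> nat \<Rightarrow> 's \<Rightarrow> real" where
  "chain_dist P S s0 0 = (\<lambda>s. if s = s0 then 1 else 0)"
| "chain_dist P S s0 (Suc t) = (\<lambda>s. \<Sum>r\<in>S. chain_dist P S s0 t r * P r s)"

definition is_stationary :: "('s \<Rightarrow> 's \<Rightarrow> real) \<Rightarrow> 's set \<Rightarrow> ('s \<Rightarrow> real) \<Rightarrow> bool" where
  "is_stationary P S \<pi> \<longleftrightarrow> (\<forall>s\<in>S. 0 \<le> \<pi> s) \<and> (\<forall>s. s \<notin> S \<longrightarrow> \<pi> s = 0)
      \<and> (\<Sum>s\<in>S. \<pi> s) = 1 \<and> (\<forall>s\<in>S. (\<Sum>r\<in>S. \<pi> r * P r s) = \<pi> s)"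

definition stat_dist :: "('s \<Rightarrow> 's \<Rightarrow> real) \<Rightarrow> 's set \<Rightarrow> 's \<Rightarrow> real" where
  "stat_dist P S = (THE \<pi>. is_stationary P S \<pi>)"

definition tv_dist :: "'s set \<Rightarrow> ('s \<Rightarrow> real) \<Rightarrow> ('s \<Rightarrow> real) \<Rightarrow> real" where
  "tv_dist S \<mu> \<nu> = (\<Sum>s\<in>S. \<bar>\<mu> s - \<nu> s\<bar>) / 2"

definition worst_dist :: "('s \<Rightarrow> 's \<Rightarrow> real) \<Rightarrow> 's set \<Rightarrow> nat \<Rightarrow> real" where
  "worst_dist P S t = Max ((\<lambda>s0. tv_dist S (chain_dist P S s0 t) (stat_dist P S)) ` S)"

definition mix_time :: "('s \<Rightarrow> 's \<Rightarrow> real) \<Rightarrow> 's set \<Rightarrow> real \<Rightarrow> nat" where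
  "mix_time P S \<epsilon> = Inf {t. worst_dist P S t \<le> \<epsilon>}"

definition sis_mix :: "nat \<Rightarrow> nat \<Rightarrow> (nat \<Rightarrow> nat) \<Rightarrow> real \<Rightarrow> real \<Rightarrow> real \<Rightarrow> real \<Rightarrow> nat" where
  "sis_mix d n f a lam kap \<epsilon> = mix_time (sis_P d n f a lam kap) (states n) \<epsilon>"

end

theory Submission
  imports Defs "HOL-Real_Asymp.Real_Asymp"
begin

definition ind :: "bool \<Rightarrow> real" where "ind b = (if b then 1 else 0)"

lemma sum_if_eq:
  assumes "finite S" "c \<in> S"
  shows "(\<Sum>\<tau>\<in>S. (if \<tau> = c then k else 0) * g \<tau>) = (k * g c :: real)"
proof -
  have "(\<Sum>\<tau>\<in>S. (if \<tau> = c then k else 0) * g \<tau>) = (\<Sum>\<tau>\<in>S. (if \<tau> = c then k * g c else 0))"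
    by (rule sum.cong) auto
  also have "\<dots> = k * g c" using assms by simp
  finally show ?thesis .
qed

lemma sum_swap_mult:
  fixes f :: "'a \<Rightarrow> real"
  shows "(\<Sum>s\<in>B. (\<Sum>r\<in>A. f r * h r s) * g s) = (\<Sum>r\<in>A. f r * (\<Sum>s\<in>B. h r s * g s))"
proof -
  have "(\<Sum>s\<in>B. (\<Sum>r\<in>A. f r * h r s) * g s) = (\<Sum>s\<in>B. \<Sum>r\<in>A. f r * (h r s * g s))"
    by (simp add: sum_distrib_right mult.assoc)
  also have "\<dots> = (\<Sum>r\<in>A. \<Sum>s\<in>B. f r * (h r s * g s))" by (rule sum.swap)
  also have "\<dots> = (\<Sum>r\<in>A. f r * (\<Sum>s\<in>B. h r s * g s))" by (simp add: sum_distrib_left)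
  finally show ?thesis .
qed

lemma sum_swap_1:
  fixes f :: "'a \<Rightarrow> real"
  shows "(\<Sum>s\<in>B. (\<Sum>r\<in>A. f r * h r s)) = (\<Sum>r\<in>A. f r * (\<Sum>s\<in>B. h r s))"
  using sum_swap_mult[where g="\<lambda>_. 1"] by simp

locale fmc =
  fixes P :: "'s \<Rightarrow> 's \<Rightarrow> real" and S :: "'s set"
  assumes fin: "finite S"
    and nonneg: "\<And>r s. r \<in> S \<Longrightarrow> 0 \<le> P r s"
    and rowsum: "\<And>r. r \<in> S \<Longrightarrow> (\<Sum>s\<in>S. P r s) = 1"
    and outside: "\<And>r s. r \<in> S \<Longrightarrow> s \<notin> S \<Longrightarrow> P r s = 0"
begin

abbreviation mu where "mu s0 t \<equiv> chain_dist P S s0 t"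

lemma mu_props:
  assumes "s0 \<in> S"
  shows "(\<forall>s. 0 \<le> mu s0 t s) \<and> (\<forall>s. s \<notin> S \<longrightarrow> mu s0 t s = 0) \<and> (\<Sum>s\<in>S. mu s0 t s) = 1"
proof (induction t)
  case 0
  then show ?case using assms fin by auto
next
  case (Suc t)
  have 1: "\<forall>s. 0 \<le> mu s0 (Suc t) s"
    using Suc nonneg by (auto intro!: sum_nonneg)
  have 2: "\<forall>s. s \<notin> S \<longrightarrow> mu s0 (Suc t) s = 0"
    using outside by auto
  have "(\<Sum>s\<in>S. mu s0 (Suc t) s) = (\<Sum>r\<in>S. mu s0 t r * (\<Sum>s\<in>S. P r s))"
    by (simp add: sum_swap_1)
  also have "\<dots> = (\<Sum>r\<in>S. mu s0 t r)" using rowsum by simp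
  finally show ?case using 1 2 Suc by simp
qed

lemma mu_nonneg: "s0 \<in> S \<Longrightarrow> 0 \<le> mu s0 t s" using mu_props by blast
lemma mu_out: "s0 \<in> S \<Longrightarrow> s \<notin> S \<Longrightarrow> mu s0 t s = 0" using mu_props by blast
lemma mu_sum: "s0 \<in> S \<Longrightarrow> (\<Sum>s\<in>S. mu s0 t s) = 1" using mu_props by blast

lemma mu_le1: "s0 \<in> S \<Longrightarrow> mu s0 t s \<le> 1"
proof (cases "s \<in> S")
  case True
  assume "s0 \<in> S"
  then have "mu s0 t s \<le> (\<Sum>s\<in>S. mu s0 t s)"
    using True fin by (intro member_le_sum) (auto simp: mu_nonneg)
  then show ?thesis using mu_sum \<open>s0 \<in> S\<close> by simp
qed (simp add: mu_out)

lemma mu_step_exp: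
  "(\<Sum>s\<in>S. mu s0 (Suc t) s * g s) = (\<Sum>r\<in>S. mu s0 t r * (\<Sum>s\<in>S. P r s * g s))"
  by (simp add: sum_swap_mult)

lemma CK:
  assumes "s0 \<in> S"
  shows "mu s0 (t + k) s = (\<Sum>r\<in>S. mu s0 t r * mu r k s)"
proof (induction k arbitrary: s)
  case 0
  show ?case
  proof (cases "s \<in> S")
    case True
    have "(\<Sum>r\<in>S. mu s0 t r * mu r 0 s) = (\<Sum>r\<in>S. (if r = s then mu s0 t s else 0))"
      by (rule sum.cong) auto
    then show ?thesis using True fin by simp
  next
    case False
    have "(\<Sum>r\<in>S. mu s0 t r * mu r 0 s) = 0" using False by (intro sum.neutral) auto
    then show ?thesis using mu_out[OF assms False] by simp
  qed
next
  case (Suc k)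
  have "mu s0 (t + Suc k) s = (\<Sum>q\<in>S. mu s0 (t + k) q * P q s)" by simp
  also have "\<dots> = (\<Sum>q\<in>S. (\<Sum>r\<in>S. mu s0 t r * mu r k q) * P q s)" using Suc by simp
  also have "\<dots> = (\<Sum>r\<in>S. mu s0 t r * (\<Sum>q\<in>S. mu r k q * P q s))"
    by (simp add: sum_swap_mult)
  also have "\<dots> = (\<Sum>r\<in>S. mu s0 t r * mu r (Suc k) s)" by simp
  finally show ?case .
qed

lemma stat_iter:
  assumes "is_stationary P S \<pi>"
  shows "(\<Sum>r\<in>S. \<pi> r * mu r k s) = \<pi> s"
proof (induction k arbitrary: s)
  case 0
  show ?case
  proof (cases "s \<in> S")
    case True
    have "(\<Sum>r\<in>S. \<pi> r * mu r 0 s) = (\<Sum>r\<in>S. (if r = s then \<pi> s else 0))"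
      by (rule sum.cong) auto
    then show ?thesis using True fin by simp
  next
    case False
    have "(\<Sum>r\<in>S. \<pi> r * mu r 0 s) = 0" using False by (intro sum.neutral) auto
    then show ?thesis using False assms unfolding is_stationary_def by simp
  qed
next
  case (Suc k)
  have "(\<Sum>r\<in>S. \<pi> r * mu r (Suc k) s) = (\<Sum>q\<in>S. (\<Sum>r\<in>S. \<pi> r * mu r k q) * P q s)"
    by (simp add: sum_swap_mult)
  also have "\<dots> = (\<Sum>q\<in>S. \<pi> q * P q s)" using Suc by simp
  also have "\<dots> = \<pi> s"
  proof (cases "s \<in> S")
    case True then show ?thesis using assms unfolding is_stationary_def by auto
  next
    case False then show ?thesis using assms outside unfolding is_stationary_def by auto
  qed
  finally show ?case .
qed

lemma stat_exp:
  assumes "is_stationary P S \<pi>"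
  shows "(\<Sum>s\<in>S. \<pi> s * g s) = (\<Sum>r\<in>S. \<pi> r * (\<Sum>s\<in>S. P r s * g s))"
proof -
  have "(\<Sum>s\<in>S. \<pi> s * g s) = (\<Sum>s\<in>S. (\<Sum>r\<in>S. \<pi> r * P r s) * g s)"
    using assms unfolding is_stationary_def by (intro sum.cong) auto
  also have "\<dots> = (\<Sum>r\<in>S. \<pi> r * (\<Sum>s\<in>S. P r s * g s))"
    by (simp add: sum_swap_mult)
  finally show ?thesis .
qed

end

lemma contract:
  fixes Q :: "'s \<Rightarrow> 's \<Rightarrow> real"
  assumes fin: "finite S" and ss: "ss \<in> S" and Qn: "\<And>r s. r\<in>S \<Longrightarrow> 0 \<le> Q r s"
    and Qs: "\<And>r. r\<in>S \<Longrightarrow> (\<Sum>s\<in>S. Q r s) = 1"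
    and Qc: "\<And>r. r \<in> S \<Longrightarrow> c \<le> Q r ss" and nu: "(\<Sum>r\<in>S. \<nu> r) = 0"
  shows "(\<Sum>s\<in>S. \<bar>\<Sum>r\<in>S. \<nu> r * Q r s\<bar>) \<le> (1 - c) * (\<Sum>r\<in>S. \<bar>\<nu> r\<bar>)"
proof -
  define Q' where "Q' r s = Q r s - (if s = ss then c else 0)" for r s
  have eq: "(\<Sum>r\<in>S. \<nu> r * Q r s) = (\<Sum>r\<in>S. \<nu> r * Q' r s)" for s
  proof -
    have "(\<Sum>r\<in>S. \<nu> r * Q' r s) = (\<Sum>r\<in>S. \<nu> r * Q r s) - (\<Sum>r\<in>S. \<nu> r) * (if s = ss then c else 0)"
      unfolding Q'_def by (simp add: algebra_simps sum_subtractf sum_distrib_right)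
    then show ?thesis using nu by simp
  qed
  have Q'n: "r \<in> S \<Longrightarrow> 0 \<le> Q' r s" for r s
    using Qn Qc unfolding Q'_def by auto
  have Q's: "r \<in> S \<Longrightarrow> (\<Sum>s\<in>S. Q' r s) = 1 - c" for r
  proof -
    assume r: "r \<in> S"
    have "(\<Sum>s\<in>S. Q' r s) = (\<Sum>s\<in>S. Q r s) - (\<Sum>s\<in>S. (if s = ss then c else 0))"
      unfolding Q'_def by (simp add: sum_subtractf)
    then show ?thesis using Qs[OF r] ss fin by simp
  qed
  have "(\<Sum>s\<in>S. \<bar>\<Sum>r\<in>S. \<nu> r * Q r s\<bar>) = (\<Sum>s\<in>S. \<bar>\<Sum>r\<in>S. \<nu> r * Q' r s\<bar>)"
    using eq by simp
  also have "\<dots> \<le> (\<Sum>s\<in>S. \<Sum>r\<in>S. \<bar>\<nu> r\<bar> * Q' r s)"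
  proof (rule sum_mono)
    fix s assume "s \<in> S"
    have "\<bar>\<Sum>r\<in>S. \<nu> r * Q' r s\<bar> \<le> (\<Sum>r\<in>S. \<bar>\<nu> r * Q' r s\<bar>)" by (rule sum_abs)
    also have "\<dots> = (\<Sum>r\<in>S. \<bar>\<nu> r\<bar> * Q' r s)"
      using Q'n by (intro sum.cong) (auto simp: abs_mult)
    finally show "\<bar>\<Sum>r\<in>S. \<nu> r * Q' r s\<bar> \<le> (\<Sum>r\<in>S. \<bar>\<nu> r\<bar> * Q' r s)" .
  qed
  also have "\<dots> = (\<Sum>r\<in>S. \<bar>\<nu> r\<bar> * (\<Sum>s\<in>S. Q' r s))"
    by (simp add: sum_swap_1)
  also have "\<dots> = (\<Sum>r\<in>S. \<bar>\<nu> r\<bar> * (1 - c))" using Q's by simp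
  also have "\<dots> = (1 - c) * (\<Sum>r\<in>S. \<bar>\<nu> r\<bar>)" by (metis mult.commute sum_distrib_right)
  finally show ?thesis .
qed

context fmc begin

lemma stat_unique:
  assumes ss: "ss \<in> S" and c: "0 < c" and minor: "\<And>r. r \<in> S \<Longrightarrow> c \<le> mu r T ss"
    and s1: "is_stationary P S \<pi>1" and s2: "is_stationary P S \<pi>2"
  shows "\<pi>1 = \<pi>2"
proof -
  define \<nu> where "\<nu> r = \<pi>1 r - \<pi>2 r" for r
  have p1: "sum \<pi>1 S = 1" "\<And>s. s \<notin> S \<Longrightarrow> \<pi>1 s = 0" using s1 unfolding is_stationary_def by simp_all
  have p2: "sum \<pi>2 S = 1" "\<And>s. s \<notin> S \<Longrightarrow> \<pi>2 s = 0" using s2 unfolding is_stationary_def by simp_all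
  have nu0: "(\<Sum>r\<in>S. \<nu> r) = 0" using p1 p2 unfolding \<nu>_def by (simp add: sum_subtractf)
  have eqs: "\<nu> s = (\<Sum>r\<in>S. \<nu> r * mu r T s)" for s
    using stat_iter[OF s1, of T s] stat_iter[OF s2, of T s] unfolding \<nu>_def
    by (simp add: left_diff_distrib sum_subtractf)
  have "(\<Sum>s\<in>S. \<bar>\<nu> s\<bar>) = (\<Sum>s\<in>S. \<bar>\<Sum>r\<in>S. \<nu> r * mu r T s\<bar>)"
    by (intro sum.cong refl arg_cong[where f=abs] eqs)
  also have "\<dots> \<le> (1-c) * (\<Sum>r\<in>S. \<bar>\<nu> r\<bar>)"
    by (rule contract[OF fin ss]) (auto simp: mu_nonneg mu_sum minor nu0)
  finally have h: "(\<Sum>s\<in>S. \<bar>\<nu> s\<bar>) \<le> (1-c) * (\<Sum>r\<in>S. \<bar>\<nu> r\<bar>)" .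
  then have "c * (\<Sum>s\<in>S. \<bar>\<nu> s\<bar>) \<le> 0" by (simp add: left_diff_distrib)
  then have "(\<Sum>s\<in>S. \<bar>\<nu> s\<bar>) \<le> 0" using c by (simp add: mult_le_0_iff)
  moreover have "0 \<le> (\<Sum>s\<in>S. \<bar>\<nu> s\<bar>)" by (rule sum_nonneg) simp
  ultimately have "(\<Sum>s\<in>S. \<bar>\<nu> s\<bar>) = 0" by linarith
  then have z: "\<forall>s\<in>S. \<nu> s = 0" using sum_nonneg_eq_0_iff[OF fin, of "\<lambda>s. \<bar>\<nu> s\<bar>"] by simp
  show ?thesis
  proof
    fix s show "\<pi>1 s = \<pi>2 s"
      using z p1 p2 unfolding \<nu>_def by (cases "s \<in> S") auto
  qed
qed

lemma stat_exists:
  assumes ss: "ss \<in> S" and c: "0 < c" and minor: "\<And>r. r \<in> S \<Longrightarrow> c \<le> mu r T ss"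
  shows "\<exists>\<pi>. is_stationary P S \<pi>"
proof -
  have c1: "c \<le> 1" using minor[OF ss] mu_le1[OF ss] order_trans by blast
  define D where "D u v = (\<Sum>s\<in>S. \<bar>mu ss u s - mu ss v s\<bar>)" for u v
  have D0: "0 \<le> D u v" for u v unfolding D_def by (rule sum_nonneg) auto
  have Dle2: "D u v \<le> 2" for u v
  proof -
    have "D u v \<le> (\<Sum>s\<in>S. \<bar>mu ss u s\<bar> + \<bar>mu ss v s\<bar>)" unfolding D_def
      by (intro sum_mono) (rule abs_triangle_ineq4)
    also have "\<dots> = 2" using mu_sum[OF ss] mu_nonneg[OF ss] by (simp add: sum.distrib)
    finally show ?thesis .
  qed
  have Dstep: "D (u + T) (v + T) \<le> (1 - c) * D u v" for u v
  proof -
    have "D (u+T) (v+T) = (\<Sum>s\<in>S. \<bar>\<Sum>r\<in>S. (mu ss u r - mu ss v r) * mu r T s\<bar>)"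
      unfolding D_def CK[OF ss] by (simp add: left_diff_distrib sum_subtractf)
    also have "\<dots> \<le> (1-c) * D u v" unfolding D_def
      by (rule contract[OF fin ss]) (auto simp: mu_nonneg mu_sum minor sum_subtractf mu_sum[OF ss])
    finally show ?thesis .
  qed
  have Dk: "D (u + k*T) (v + k*T) \<le> (1-c)^k * 2" for u v k
  proof (induction k)
    case 0 show ?case using Dle2 by simp
  next
    case (Suc k)
    have "D (u + Suc k * T) (v + Suc k * T) = D ((u + k*T) + T) ((v + k*T) + T)" by (simp add: algebra_simps)
    also have "\<dots> \<le> (1-c) * D (u + k*T) (v+k*T)" by (rule Dstep)
    also have "\<dots> \<le> (1-c) * ((1-c)^k * 2)" using Suc c1 by (intro mult_left_mono) auto
    finally show ?case by simp
  qed
  have pt: "\<bar>mu ss u s - mu ss v s\<bar> \<le> D u v" for u v s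
  proof (cases "s \<in> S")
    case True then show ?thesis unfolding D_def using fin by (intro member_le_sum) auto
  next
    case False then show ?thesis using mu_out[OF ss] D0 by simp
  qed
  define x where "x k s = mu ss (k*T) s" for k s
  have xd: "\<bar>x (Suc k) s - x k s\<bar> \<le> 2 * (1-c)^k" for k s
    using pt[of "T + k*T" s "0 + k*T"] Dk[of T k 0] unfolding x_def by (simp add: algebra_simps)
  have geo: "summable (\<lambda>k. 2 * (1-c)^k)" using c c1 by (intro summable_mult summable_geometric) auto
  have conv: "convergent (\<lambda>k. x k s)" for s
  proof -
    have sm: "summable (\<lambda>k. x (Suc k) s - x k s)"
      by (rule summable_comparison_test'[OF geo]) (use xd in auto)
    have "(\<lambda>k. \<Sum>i<k. x (Suc i) s - x i s) \<longlonglongrightarrow> suminf (\<lambda>k. x (Suc k) s - x k s)"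
      by (rule summable_LIMSEQ[OF sm])
    hence "(\<lambda>k. x k s - x 0 s) \<longlonglongrightarrow> suminf (\<lambda>k. x (Suc k) s - x k s)"
      using sum_lessThan_telescope[of "\<lambda>i. x i s"] by simp
    hence "(\<lambda>k. x k s - x 0 s + x 0 s) \<longlonglongrightarrow> suminf (\<lambda>k. x (Suc k) s - x k s) + x 0 s"
      by (intro tendsto_add) auto
    thus ?thesis by (auto simp: convergent_def)
  qed
  define \<pi> where "\<pi> s = lim (\<lambda>k. x k s)" for s
  have xlim: "(\<lambda>k. x k s) \<longlonglongrightarrow> \<pi> s" for s
    using conv[of s] unfolding \<pi>_def by (simp add: convergent_LIMSEQ_iff)
  have g0: "(\<lambda>k. 2 * (1-c)^k) \<longlonglongrightarrow> 0"
    using c c1 by (intro tendsto_mult_right_zero LIMSEQ_power_zero) auto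
  have st: "is_stationary P S \<pi>"
    unfolding is_stationary_def
  proof (intro conjI ballI allI impI)
    fix s assume "s \<in> S"
    show "0 \<le> \<pi> s"
      by (rule LIMSEQ_le_const[OF xlim]) (auto simp: x_def mu_nonneg[OF ss])
  next
    fix s assume "s \<notin> S"
    then have "(\<lambda>k. x k s) = (\<lambda>k. 0)" unfolding x_def using mu_out[OF ss] by auto
    then show "\<pi> s = 0" using xlim[of s] LIMSEQ_unique by (metis tendsto_const)
  next
    have "(\<lambda>k. \<Sum>s\<in>S. x k s) \<longlonglongrightarrow> (\<Sum>s\<in>S. \<pi> s)" by (intro tendsto_sum xlim)
    moreover have "(\<lambda>k. \<Sum>s\<in>S. x k s) = (\<lambda>k. 1)" unfolding x_def using mu_sum[OF ss] by auto
    ultimately show "(\<Sum>s\<in>S. \<pi> s) = 1" using LIMSEQ_unique by (metis tendsto_const)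
  next
    fix s assume "s \<in> S"
    have l1: "(\<lambda>k. \<Sum>r\<in>S. x k r * P r s) \<longlonglongrightarrow> (\<Sum>r\<in>S. \<pi> r * P r s)"
      by (intro tendsto_sum tendsto_mult_right xlim)
    have eq: "(\<Sum>r\<in>S. x k r * P r s) = mu ss (Suc (k*T)) s" for k unfolding x_def by simp
    have dd: "\<bar>mu ss (Suc (k*T)) s - x k s\<bar> \<le> 2 * (1-c)^k" for k
      using pt[of "1 + k*T" s "0 + k*T"] Dk[of 1 k 0] unfolding x_def by (simp add: algebra_simps)
    have "(\<lambda>k. mu ss (Suc (k*T)) s - x k s) \<longlonglongrightarrow> 0"
      by (rule Lim_null_comparison[OF _ g0]) (use dd in auto)
    hence "(\<lambda>k. (mu ss (Suc (k*T)) s - x k s) + x k s) \<longlonglongrightarrow> 0 + \<pi> s"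
      by (intro tendsto_add xlim)
    hence l2: "(\<lambda>k. \<Sum>r\<in>S. x k r * P r s) \<longlonglongrightarrow> \<pi> s" using eq by simp
    show "(\<Sum>r\<in>S. \<pi> r * P r s) = \<pi> s" using LIMSEQ_unique[OF l1 l2] .
  qed
  then show ?thesis by blast
qed

lemma stat_dist_ok:
  assumes ss: "ss \<in> S" and c: "0 < c" and minor: "\<And>r. r \<in> S \<Longrightarrow> c \<le> mu r T ss"
  shows "is_stationary P S (stat_dist P S)"
proof -
  obtain \<pi> where p: "is_stationary P S \<pi>" using stat_exists[OF assms] by blast
  have "stat_dist P S = \<pi>" unfolding stat_dist_def
    by (rule the_equality) (fact p, rule stat_unique[OF assms _ p])
  then show ?thesis using p by simp
qed

end

lemma rec_bound:
  fixes u :: "nat \<Rightarrow> real"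
  assumes step: "\<And>t. u (Suc t) \<le> \<rho> * u t + \<beta>" and r0: "0 \<le> \<rho>" and r1: "\<rho> < 1" and b0: "0 \<le> \<beta>"
  shows "u t \<le> \<rho>^t * u 0 + \<beta> / (1 - \<rho>)"
proof (induction t)
  case 0 show ?case using r1 b0 by simp
next
  case (Suc t)
  have "u (Suc t) \<le> \<rho> * u t + \<beta>" by (rule step)
  also have "\<dots> \<le> \<rho> * (\<rho>^t * u 0 + \<beta> / (1 - \<rho>)) + \<beta>"
    using Suc r0 by (intro add_right_mono mult_left_mono) auto
  also have "\<dots> = \<rho>^Suc t * u 0 + \<beta> / (1 - \<rho>)"
    using r1 by (simp add: field_simps)
  finally show ?case .
qed

lemma rec_lower:
  fixes u :: "nat \<Rightarrow> real"
  assumes step: "\<And>t. u (Suc t) \<ge> \<rho> * u t" and r0: "0 \<le> \<rho>"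
  shows "u t \<ge> \<rho>^t * u 0"
proof (induction t)
  case (Suc t)
  have "\<rho>^Suc t * u 0 = \<rho> * (\<rho>^t * u 0)" by simp
  also have "\<dots> \<le> \<rho> * u t" using Suc r0 by (intro mult_left_mono) auto
  also have "\<dots> \<le> u (Suc t)" by (rule step)
  finally show ?case .
qed simp

lemma tv_bounds:
  fixes \<mu> \<pi> :: "'s \<Rightarrow> real"
  assumes fin: "finite S" and ss: "ss \<in> S"
    and m: "(\<Sum>s\<in>S. \<mu> s) = 1" and p: "(\<Sum>s\<in>S. \<pi> s) = 1"
    and mn: "\<And>s. s\<in>S \<Longrightarrow> 0 \<le> \<mu> s" and pn: "\<And>s. s\<in>S \<Longrightarrow> 0 \<le> \<pi> s"
  shows "tv_dist S \<mu> \<pi> \<le> (\<Sum>s\<in>S-{ss}. \<mu> s) + (\<Sum>s\<in>S-{ss}. \<pi> s)"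
    and "tv_dist S \<mu> \<pi> \<ge> (\<Sum>s\<in>S-{ss}. \<mu> s) - (\<Sum>s\<in>S-{ss}. \<pi> s)"
proof -
  have sp: "sum g S = g ss + sum g (S - {ss})" for g :: "'s \<Rightarrow> real" using sum.remove[OF fin ss] .
  define mA where "mA = (\<Sum>s\<in>S-{ss}. \<mu> s)"
  define pA where "pA = (\<Sum>s\<in>S-{ss}. \<pi> s)"
  have mss: "\<mu> ss = 1 - mA" using sp[of \<mu>] m unfolding mA_def by simp
  have pss: "\<pi> ss = 1 - pA" using sp[of \<pi>] p unfolding pA_def by simp
  have tot: "(\<Sum>s\<in>S. \<bar>\<mu> s - \<pi> s\<bar>) = \<bar>\<mu> ss - \<pi> ss\<bar> + (\<Sum>s\<in>S-{ss}. \<bar>\<mu> s - \<pi> s\<bar>)"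
    by (rule sp)
  have mA0: "0 \<le> mA" unfolding mA_def by (rule sum_nonneg) (use mn in auto)
  have pA0: "0 \<le> pA" unfolding pA_def by (rule sum_nonneg) (use pn in auto)
  have u: "(\<Sum>s\<in>S-{ss}. \<bar>\<mu> s - \<pi> s\<bar>) \<le> (\<Sum>s\<in>S-{ss}. \<mu> s + \<pi> s)"
    by (rule sum_mono) (use mn pn in \<open>auto simp: abs_if\<close>)
  have l: "(\<Sum>s\<in>S-{ss}. \<bar>\<mu> s - \<pi> s\<bar>) \<ge> (\<Sum>s\<in>S-{ss}. \<mu> s - \<pi> s)"
    by (rule sum_mono) auto
  have u2: "(\<Sum>s\<in>S-{ss}. \<bar>\<mu> s - \<pi> s\<bar>) \<le> mA + pA"
    using u unfolding mA_def pA_def by (simp add: sum.distrib)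
  have u3: "\<bar>\<mu> ss - \<pi> ss\<bar> \<le> mA + pA" using mss pss mA0 pA0 by (auto simp: abs_if)
  show "tv_dist S \<mu> \<pi> \<le> (\<Sum>s\<in>S-{ss}. \<mu> s) + (\<Sum>s\<in>S-{ss}. \<pi> s)"
    using tot u2 u3 unfolding tv_dist_def mA_def[symmetric] pA_def[symmetric] by linarith
  show "tv_dist S \<mu> \<pi> \<ge> (\<Sum>s\<in>S-{ss}. \<mu> s) - (\<Sum>s\<in>S-{ss}. \<pi> s)"
  proof -
    have l2: "(\<Sum>s\<in>S-{ss}. \<bar>\<mu> s - \<pi> s\<bar>) \<ge> mA - pA"
      using l unfolding mA_def pA_def by (simp add: sum_subtractf)
    have l3: "\<bar>\<mu> ss - \<pi> ss\<bar> \<ge> mA - pA" using mss pss by (auto simp: abs_if)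
    show ?thesis using tot l2 l3 unfolding tv_dist_def mA_def[symmetric] pA_def[symmetric] by linarith
  qed
qed

lemma mass_le_exp:
  fixes \<nu> Z :: "'s \<Rightarrow> real"
  assumes fin: "finite S" and ss: "ss \<in> S" and nn: "\<And>s. s\<in>S \<Longrightarrow> 0 \<le> \<nu> s"
    and Z0: "0 \<le> Z ss" and Z1: "\<And>s. s \<in> S - {ss} \<Longrightarrow> 1 \<le> Z s"
  shows "(\<Sum>s\<in>S-{ss}. \<nu> s) \<le> (\<Sum>s\<in>S. \<nu> s * Z s)"
proof -
  have "(\<Sum>s\<in>S-{ss}. \<nu> s) \<le> (\<Sum>s\<in>S-{ss}. \<nu> s * Z s)"
  proof (rule sum_mono)
    fix s assume s: "s \<in> S-{ss}"
    show "\<nu> s \<le> \<nu> s * Z s" using mult_left_mono[of 1 "Z s" "\<nu> s"] nn Z1[OF s] s by auto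
  qed
  also have "\<dots> \<le> \<nu> ss * Z ss + (\<Sum>s\<in>S-{ss}. \<nu> s * Z s)"
    using nn[OF ss] Z0 by simp
  also have "\<dots> = (\<Sum>s\<in>S. \<nu> s * Z s)" using sum.remove[OF fin ss, of "\<lambda>s. \<nu> s * Z s"] by simp
  finally show ?thesis .
qed

lemma second_moment:
  fixes \<nu> Z :: "'s \<Rightarrow> real"
  assumes fin: "finite S" and ss: "ss \<in> S" and nn: "\<And>s. s\<in>S \<Longrightarrow> 0 \<le> \<nu> s"
    and Z0: "Z ss = 0"
  shows "(\<Sum>s\<in>S. \<nu> s * Z s)^2 \<le> (\<Sum>s\<in>S. \<nu> s * (Z s)^2) * (\<Sum>s\<in>S-{ss}. \<nu> s)"
proof -
  have e1: "(\<Sum>s\<in>S. \<nu> s * Z s) = (\<Sum>s\<in>S-{ss}. \<nu> s * Z s)"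
    using sum.remove[OF fin ss, of "\<lambda>s. \<nu> s * Z s"] Z0 by simp
  have e2: "(\<Sum>s\<in>S. \<nu> s * (Z s)^2) = (\<Sum>s\<in>S-{ss}. \<nu> s * (Z s)^2)"
    using sum.remove[OF fin ss, of "\<lambda>s. \<nu> s * (Z s)^2"] Z0 by simp
  have "(\<Sum>s\<in>S-{ss}. \<nu> s * Z s) = (\<Sum>s\<in>S-{ss}. (sqrt (\<nu> s) * Z s) * sqrt (\<nu> s))"
    using nn by (intro sum.cong) (auto simp: algebra_simps real_sqrt_mult_self)
  hence "(\<Sum>s\<in>S-{ss}. \<nu> s * Z s)^2 \<le> (\<Sum>s\<in>S-{ss}. (sqrt (\<nu> s) * Z s)^2) * (\<Sum>s\<in>S-{ss}. (sqrt (\<nu> s))^2)"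
    using Cauchy_Schwarz_ineq_sum by metis
  also have "\<dots> = (\<Sum>s\<in>S-{ss}. \<nu> s * (Z s)^2) * (\<Sum>s\<in>S-{ss}. \<nu> s)"
    using nn by (simp add: power_mult_distrib)
  finally show ?thesis using e1 e2 by simp
qed

lemma finite_states: "finite (states n)"
proof -
  have "states n \<subseteq> (\<lambda>A x. x \<in> A) ` Pow {..<n}"
  proof
    fix \<sigma> assume s: "\<sigma> \<in> states n"
    have "\<sigma> = (\<lambda>x. x \<in> {x. x < n \<and> \<sigma> x})"
    proof (rule ext)
      fix x show "\<sigma> x = (x \<in> {x. x < n \<and> \<sigma> x})"
        using s unfolding states_def by (cases "x < n") auto
    qed
    then show "\<sigma> \<in> (\<lambda>A x. x \<in> A) ` Pow {..<n}" by blast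
  qed
  then show ?thesis by (rule finite_subset) simp
qed

lemma upd_states: "\<sigma> \<in> states n \<Longrightarrow> z < n \<Longrightarrow> \<sigma>(z := v) \<in> states n"
  unfolding states_def by auto

locale sis =
  fixes d n :: nat and f :: "nat \<Rightarrow> nat" and a lam kap :: real
  assumes n3: "3 \<le> n" and kap_pos: "0 < kap" and kap_small: "kap < 1 / (4 * (real n - 1)^2)"
    and a_big: "a > 1 - 1 / (real n)^2" and lam_nn: "0 \<le> lam"
begin

definition ap :: real where "ap = min 1 a"

lemma n_pos: "0 < real n" using n3 by simp

lemma ap_big: "ap \<ge> 1 - 1 / (real n)^2"
  using a_big unfolding ap_def by (auto simp: min_def)

lemma ap_ge: "ap \<ge> 8/9"
proof -
  have "1 / (real n)^2 \<le> 1/9"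
  proof -
    have "(3::real)*3 \<le> real n * real n" by (rule mult_mono) (use n3 in auto)
    then show ?thesis by (intro divide_left_mono) (auto simp: power2_eq_square)
  qed
  then show ?thesis using ap_big by linarith
qed

lemma ap_le: "ap \<le> 1" unfolding ap_def by simp

lemma kap_le: "kap \<le> 1/16"
proof -
  have "(2::real)^2 \<le> (real n - 1)^2" by (rule power_mono) (use n3 in auto)
  then have "(real n - 1)^2 \<ge> 4" by simp
  then have "1 / (4 * (real n - 1)^2) \<le> 1/(4*4)"
    by (intro divide_left_mono mult_left_mono mult_pos_pos) auto
  then show ?thesis using kap_small by linarith
qed

lemma infp_bounds: "ap \<le> infp d n f a lam \<sigma> x" "infp d n f a lam \<sigma> x \<le> 1"
proof -
  have "0 \<le> lam * real (nI d n f \<sigma> x)" using lam_nn by simp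
  then show "ap \<le> infp d n f a lam \<sigma> x" "infp d n f a lam \<sigma> x \<le> 1"
    unfolding infp_def ap_def by (auto simp: min_def)
qed

abbreviation "S \<equiv> states n"
abbreviation "PP \<equiv> sis_P d n f a lam kap"
abbreviation "site \<equiv> site_step d n f a lam kap"
abbreviation "pp \<equiv> infp d n f a lam"

lemma site_formula:
  assumes s: "\<sigma> \<in> S" and z: "z < n"
  shows "(\<Sum>\<tau>\<in>S. site z \<sigma> \<tau> * g \<tau>) =
    (if \<sigma> z then kap * g (\<sigma>(z:=False)) + (1-kap) * g \<sigma>
     else pp \<sigma> z * g (\<sigma>(z:=True)) + (1 - pp \<sigma> z) * g \<sigma>)"
proof (cases "\<sigma> z")
  case True
  have "(\<Sum>\<tau>\<in>S. site z \<sigma> \<tau> * g \<tau>) =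
      (\<Sum>\<tau>\<in>S. (if \<tau> = \<sigma>(z := False) then kap else 0) * g \<tau>) + (\<Sum>\<tau>\<in>S. (if \<tau> = \<sigma> then 1 - kap else 0) * g \<tau>)"
    unfolding site_step_def using True by (simp add: distrib_right sum.distrib)
  also have "\<dots> = kap * g (\<sigma>(z:=False)) + (1-kap) * g \<sigma>"
    using sum_if_eq[OF finite_states upd_states[OF s z]] sum_if_eq[OF finite_states s] by simp
  finally show ?thesis using True by simp
next
  case False
  have "(\<Sum>\<tau>\<in>S. site z \<sigma> \<tau> * g \<tau>) =
      (\<Sum>\<tau>\<in>S. (if \<tau> = \<sigma>(z := True) then pp \<sigma> z else 0) * g \<tau>) + (\<Sum>\<tau>\<in>S. (if \<tau> = \<sigma> then 1 - pp \<sigma> z else 0) * g \<tau>)"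
    unfolding site_step_def using False by (simp add: distrib_right sum.distrib)
  also have "\<dots> = pp \<sigma> z * g (\<sigma>(z:=True)) + (1 - pp \<sigma> z) * g \<sigma>"
    using sum_if_eq[OF finite_states upd_states[OF s z]] sum_if_eq[OF finite_states s] by simp
  finally show ?thesis using False by simp
qed

lemma P_exp:
  "(\<Sum>\<tau>\<in>S. PP \<sigma> \<tau> * g \<tau>) = (\<Sum>z<n. \<Sum>\<tau>\<in>S. site z \<sigma> \<tau> * g \<tau>) / real n"
proof -
  have "(\<Sum>\<tau>\<in>S. PP \<sigma> \<tau> * g \<tau>) = (\<Sum>\<tau>\<in>S. (\<Sum>z<n. site z \<sigma> \<tau> * g \<tau>) / real n)"
    unfolding sis_P_def by (simp add: sum_distrib_right)
  also have "\<dots> = (\<Sum>\<tau>\<in>S. \<Sum>z<n. site z \<sigma> \<tau> * g \<tau>) / real n" by (simp add: sum_divide_distrib)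
  also have "\<dots> = (\<Sum>z<n. \<Sum>\<tau>\<in>S. site z \<sigma> \<tau> * g \<tau>) / real n"
    by (rule arg_cong[where f="\<lambda>x. x / real n"], rule sum.swap)
  finally show ?thesis .
qed

lemma site_nonneg: "0 \<le> site z \<sigma> \<tau>"
  unfolding site_step_def using infp_bounds[of \<sigma> z] kap_le kap_pos ap_ge by auto

lemma fmc_inst: "fmc PP S"
proof
  show "finite S" by (rule finite_states)
next
  fix r s show "0 \<le> PP r s" unfolding sis_P_def using site_nonneg by (auto intro!: sum_nonneg divide_nonneg_nonneg)
next
  fix r assume r: "r \<in> S"
  have "(\<Sum>s\<in>S. PP r s) = (\<Sum>s\<in>S. PP r s * 1)" by simp
  also have "\<dots> = (\<Sum>z<n. \<Sum>\<tau>\<in>S. site z r \<tau> * 1) / real n" by (rule P_exp)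
  also have "\<dots> = (\<Sum>z<n. 1::real) / real n"
    using site_formula[OF r, where g="\<lambda>_. 1"] by (intro arg_cong[where f="\<lambda>x. x / real n"] sum.cong) auto
  also have "\<dots> = 1" using n_pos by simp
  finally show "(\<Sum>s\<in>S. PP r s) = 1" .
next
  fix r s assume r: "r \<in> S" and s: "s \<notin> S"
  have "site z r s = 0" if "z < n" for z
    using upd_states[OF r that] r s unfolding site_step_def by auto
  then show "PP r s = 0" unfolding sis_P_def by simp
qed

interpretation F: fmc PP S by (rule fmc_inst)

end

lemma ind_simps[simp]: "ind True = 1" "ind False = 0" "0 \<le> ind b" "ind b \<le> 1"
  by (auto simp: ind_def)

context sis begin

interpretation F: fmc PP S by (rule fmc_inst)

lemma site1:
  assumes s: "\<sigma> \<in> S" and x: "x < n" and z: "z < n"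
  shows "(\<Sum>\<tau>\<in>S. site z \<sigma> \<tau> * ind (\<not> \<tau> x)) \<le> ind (\<not> \<sigma> x) + (if z = x then kap - ap * ind (\<not> \<sigma> x) else 0)"
    and "(\<Sum>\<tau>\<in>S. site z \<sigma> \<tau> * ind (\<not> \<tau> x)) \<ge> ind (\<not> \<sigma> x) - (if z = x then ind (\<not> \<sigma> x) else 0)"
  using infp_bounds[of \<sigma> z] kap_le kap_pos ap_ge
  by (auto simp: site_formula[OF s z] ind_def)

lemma site2:
  assumes s: "\<sigma> \<in> S" and x: "x < n" and y: "y < n" and xy: "x \<noteq> y" and z: "z < n"
  shows "(\<Sum>\<tau>\<in>S. site z \<sigma> \<tau> * ind (\<not> \<tau> x \<and> \<not> \<tau> y)) \<le> ind (\<not> \<sigma> x \<and> \<not> \<sigma> y)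
     + (if z = x then kap - ap * ind (\<not> \<sigma> x \<and> \<not> \<sigma> y) else 0)
     + (if z = y then kap - ap * ind (\<not> \<sigma> x \<and> \<not> \<sigma> y) else 0)"
  using infp_bounds[of \<sigma> z] kap_le kap_pos ap_ge xy
  by (auto simp: site_formula[OF s z] ind_def)

lemma P1:
  assumes s: "\<sigma> \<in> S" and x: "x < n"
  shows "(\<Sum>\<tau>\<in>S. PP \<sigma> \<tau> * ind (\<not> \<tau> x)) \<le> (1 - ap / n) * ind (\<not> \<sigma> x) + kap / n"
    and "(\<Sum>\<tau>\<in>S. PP \<sigma> \<tau> * ind (\<not> \<tau> x)) \<ge> (1 - 1 / n) * ind (\<not> \<sigma> x)"
proof -
  let ?g = "ind (\<not> \<sigma> x)"
  have "(\<Sum>z<n. \<Sum>\<tau>\<in>S. site z \<sigma> \<tau> * ind (\<not> \<tau> x)) \<le> (\<Sum>z<n. ?g + (if z = x then kap - ap * ?g else 0))"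
    by (rule sum_mono) (use site1[OF s x] in auto)
  also have "\<dots> = n * ?g + (kap - ap * ?g)" using x by (simp add: sum.distrib)
  finally have u: "(\<Sum>z<n. \<Sum>\<tau>\<in>S. site z \<sigma> \<tau> * ind (\<not> \<tau> x)) \<le> n * ?g + (kap - ap * ?g)" .
  have "(\<Sum>z<n. \<Sum>\<tau>\<in>S. site z \<sigma> \<tau> * ind (\<not> \<tau> x)) \<ge> (\<Sum>z<n. ?g - (if z = x then ?g else 0))"
    by (rule sum_mono) (use site1[OF s x] in auto)
  moreover have "(\<Sum>z<n. ?g - (if z = x then ?g else 0)) = n * ?g - ?g" using x by (simp add: sum_subtractf)
  ultimately have l: "(\<Sum>z<n. \<Sum>\<tau>\<in>S. site z \<sigma> \<tau> * ind (\<not> \<tau> x)) \<ge> n * ?g - ?g" by simp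
  have e1: "(1 - ap / n) * ?g + kap / n = (n * ?g + (kap - ap * ?g)) / n" using n_pos by (simp add: field_simps)
  have e2: "(1 - 1 / n) * ?g = (n * ?g - ?g) / n" using n_pos by (simp add: field_simps)
  show "(\<Sum>\<tau>\<in>S. PP \<sigma> \<tau> * ind (\<not> \<tau> x)) \<le> (1 - ap / n) * ?g + kap / n"
    unfolding P_exp e1 using u n_pos by (intro divide_right_mono) auto
  show "(\<Sum>\<tau>\<in>S. PP \<sigma> \<tau> * ind (\<not> \<tau> x)) \<ge> (1 - 1 / n) * ?g"
    unfolding P_exp e2 using l n_pos by (intro divide_right_mono) auto
qed

lemma P2:
  assumes s: "\<sigma> \<in> S" and x: "x < n" and y: "y < n" and xy: "x \<noteq> y"
  shows "(\<Sum>\<tau>\<in>S. PP \<sigma> \<tau> * ind (\<not> \<tau> x \<and> \<not> \<tau> y)) \<le> (1 - 2 * ap / n) * ind (\<not> \<sigma> x \<and> \<not> \<sigma> y) + 2 * kap / n"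
proof -
  let ?g = "ind (\<not> \<sigma> x \<and> \<not> \<sigma> y)"
  have "(\<Sum>z<n. \<Sum>\<tau>\<in>S. site z \<sigma> \<tau> * ind (\<not> \<tau> x \<and> \<not> \<tau> y))
      \<le> (\<Sum>z<n. ?g + (if z = x then kap - ap * ?g else 0) + (if z = y then kap - ap * ?g else 0))"
    by (rule sum_mono) (use site2[OF s x y xy] in auto)
  also have "\<dots> = n * ?g + 2 * (kap - ap * ?g)" using x y by (simp add: sum.distrib)
  finally have u: "(\<Sum>z<n. \<Sum>\<tau>\<in>S. site z \<sigma> \<tau> * ind (\<not> \<tau> x \<and> \<not> \<tau> y)) \<le> n * ?g + 2 * (kap - ap * ?g)" .
  have e1: "(1 - 2 * ap / n) * ?g + 2 * kap / n = (n * ?g + 2 * (kap - ap * ?g)) / n" using n_pos by (simp add: field_simps)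
  show ?thesis unfolding P_exp e1 using u n_pos by (intro divide_right_mono) auto
qed

definition m1 :: "(nat \<Rightarrow> bool) \<Rightarrow> nat \<Rightarrow> nat \<Rightarrow> real" where
  "m1 r t x = (\<Sum>s\<in>S. F.mu r t s * ind (\<not> s x))"
definition m2 :: "(nat \<Rightarrow> bool) \<Rightarrow> nat \<Rightarrow> nat \<Rightarrow> nat \<Rightarrow> real" where
  "m2 r t x y = (\<Sum>s\<in>S. F.mu r t s * ind (\<not> s x \<and> \<not> s y))"

lemma lin_sum: fixes w h :: "'b \<Rightarrow> real" shows "(\<Sum>q\<in>A. w q * (B * h q + C)) = B * (\<Sum>q\<in>A. w q * h q) + C * (\<Sum>q\<in>A. w q)"
proof -
  have "(\<Sum>q\<in>A. w q * (B * h q + C)) = (\<Sum>q\<in>A. B * (w q * h q) + C * w q)"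
    by (rule sum.cong) (auto simp: algebra_simps)
  also have "\<dots> = B * (\<Sum>q\<in>A. w q * h q) + C * (\<Sum>q\<in>A. w q)"
    by (simp add: sum.distrib sum_distrib_left)
  finally show ?thesis .
qed

lemma m_init: "r \<in> S \<Longrightarrow> (\<Sum>s\<in>S. F.mu r 0 s * g s) = g r"
  using sum_if_eq[OF finite_states _, where k=1 and g=g] by simp

lemma m1_step:
  assumes r: "r \<in> S" and x: "x < n"
  shows "m1 r (Suc t) x \<le> (1 - ap / n) * m1 r t x + kap / n"
    and "m1 r (Suc t) x \<ge> (1 - 1 / n) * m1 r t x"
proof -
  have e: "m1 r (Suc t) x = (\<Sum>q\<in>S. F.mu r t q * (\<Sum>s\<in>S. PP q s * ind (\<not> s x)))"
    unfolding m1_def by (rule F.mu_step_exp)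
  have "m1 r (Suc t) x \<le> (\<Sum>q\<in>S. F.mu r t q * ((1 - ap / n) * ind (\<not> q x) + kap / n))"
    unfolding e by (rule sum_mono, rule mult_left_mono) (use P1(1)[OF _ x] F.mu_nonneg[OF r] in auto)
  also have "\<dots> = (1 - ap / n) * m1 r t x + kap / n * (\<Sum>q\<in>S. F.mu r t q)"
    unfolding m1_def by (rule lin_sum)
  finally show "m1 r (Suc t) x \<le> (1 - ap / n) * m1 r t x + kap / n" using F.mu_sum[OF r] by simp
  have "m1 r (Suc t) x \<ge> (\<Sum>q\<in>S. F.mu r t q * ((1 - 1 / n) * ind (\<not> q x)))"
    unfolding e by (rule sum_mono, rule mult_left_mono) (use P1(2)[OF _ x] F.mu_nonneg[OF r] in auto)
  moreover have "(\<Sum>q\<in>S. F.mu r t q * ((1 - 1 / n) * ind (\<not> q x))) = (1 - 1 / n) * m1 r t x"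
    unfolding m1_def using lin_sum[of "F.mu r t" "1 - 1/n" "\<lambda>q. ind (\<not> q x)" 0 S] by simp
  ultimately show "m1 r (Suc t) x \<ge> (1 - 1 / n) * m1 r t x" by simp
qed

lemma m2_step:
  assumes r: "r \<in> S" and x: "x < n" and y: "y < n" and xy: "x \<noteq> y"
  shows "m2 r (Suc t) x y \<le> (1 - 2 * ap / n) * m2 r t x y + 2 * kap / n"
proof -
  have e: "m2 r (Suc t) x y = (\<Sum>q\<in>S. F.mu r t q * (\<Sum>s\<in>S. PP q s * ind (\<not> s x \<and> \<not> s y)))"
    unfolding m2_def by (rule F.mu_step_exp)
  have "m2 r (Suc t) x y \<le> (\<Sum>q\<in>S. F.mu r t q * ((1 - 2 * ap / n) * ind (\<not> q x \<and> \<not> q y) + 2 * kap / n))"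
    unfolding e by (rule sum_mono, rule mult_left_mono) (use P2[OF _ x y xy] F.mu_nonneg[OF r] in auto)
  also have "\<dots> = (1 - 2 * ap / n) * m2 r t x y + 2 * kap / n * (\<Sum>q\<in>S. F.mu r t q)"
    unfolding m2_def by (rule lin_sum)
  finally show ?thesis using F.mu_sum[OF r] by simp
qed

lemma m1_upper:
  assumes r: "r \<in> S" and x: "x < n"
  shows "m1 r t x \<le> (1 - ap / n)^t + kap / ap"
proof -
  have "m1 r t x \<le> (1 - ap / n)^t * m1 r 0 x + (kap / n) / (1 - (1 - ap / n))"
    by (rule rec_bound) (use m1_step(1)[OF r x] ap_ge ap_le n3 kap_pos n_pos in \<open>auto simp: field_simps\<close>)
  also have "\<dots> \<le> (1 - ap / n)^t * 1 + kap / ap"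
  proof -
    have "m1 r 0 x \<le> 1" unfolding m1_def m_init[OF r] by simp
    moreover have "0 \<le> (1 - ap / n)^t" using ap_le n3 by (simp add: field_simps)
    ultimately have "(1 - ap / n)^t * m1 r 0 x \<le> (1 - ap / n)^t * 1" by (intro mult_left_mono) auto
    moreover have "(kap / n) / (1 - (1 - ap / n)) = kap / ap" using n_pos ap_ge by (simp add: field_simps)
    ultimately show ?thesis by linarith
  qed
  finally show ?thesis by simp
qed

lemma m2_upper:
  assumes r: "r \<in> S" and x: "x < n" and y: "y < n" and xy: "x \<noteq> y"
  shows "m2 r t x y \<le> (1 - 2 * ap / n)^t + kap / ap"
proof -
  have "m2 r t x y \<le> (1 - 2 * ap / n)^t * m2 r 0 x y + (2 * kap / n) / (1 - (1 - 2 * ap / n))"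
    by (rule rec_bound) (use m2_step[OF r x y xy] ap_ge ap_le n3 kap_pos n_pos in \<open>auto simp: field_simps\<close>)
  also have "\<dots> \<le> (1 - 2 * ap / n)^t * 1 + kap / ap"
  proof -
    have "m2 r 0 x y \<le> 1" unfolding m2_def m_init[OF r] by simp
    moreover have "0 \<le> (1 - 2 * ap / n)^t" using ap_le n3 by (simp add: field_simps)
    ultimately have "(1 - 2 * ap / n)^t * m2 r 0 x y \<le> (1 - 2 * ap / n)^t * 1" by (intro mult_left_mono) auto
    moreover have "(2 * kap / n) / (1 - (1 - 2 * ap / n)) = kap / ap" using n_pos ap_ge by (simp add: field_simps)
    ultimately show ?thesis by linarith
  qed
  finally show ?thesis by simp
qed

lemma zero_state: "(\<lambda>_. False) \<in> S" unfolding states_def by simp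
lemma full_state: "(\<lambda>x. x < n) \<in> S" unfolding states_def by simp

lemma m1_lower:
  assumes x: "x < n"
  shows "m1 (\<lambda>_. False) t x \<ge> (1 - 1 / n)^t"
proof -
  have "m1 (\<lambda>_. False) t x \<ge> (1 - 1/n)^t * m1 (\<lambda>_. False) 0 x"
    by (rule rec_lower) (use m1_step(2)[OF zero_state x] n_pos n3 in \<open>auto simp: field_simps\<close>)
  moreover have "m1 (\<lambda>_. False) 0 x = 1" unfolding m1_def m_init[OF zero_state] by simp
  ultimately show ?thesis by simp
qed

end

context sis begin

interpretation F: fmc PP S by (rule fmc_inst)

abbreviation full :: "nat \<Rightarrow> bool" where "full \<equiv> (\<lambda>x. x < n)"

definition Zf :: "(nat \<Rightarrow> bool) \<Rightarrow> real" where "Zf s = (\<Sum>x<n. ind (\<not> s x))"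

lemma Zf_full: "Zf full = 0" unfolding Zf_def by simp

lemma Zf_nonneg: "0 \<le> Zf s" unfolding Zf_def by (rule sum_nonneg) simp

lemma Zf_ge1: assumes "s \<in> S - {full}" shows "1 \<le> Zf s"
proof -
  have s: "s \<in> S" "s \<noteq> full" using assms by auto
  obtain x where x: "x < n" "\<not> s x"
  proof (rule ccontr)
    assume "\<not> thesis"
    then have "\<forall>x<n. s x" using that by blast
    have "s = full"
    proof (rule ext)
      fix y show "s y = (y < n)" using s(1) \<open>\<forall>x<n. s x\<close> unfolding states_def by (cases "y < n") auto
    qed
    then show False using s(2) by simp
  qed
  have "ind (\<not> s x) \<le> Zf s" unfolding Zf_def using x by (intro member_le_sum) auto
  then show ?thesis using x by simp
qed

definition EZ where "EZ r t = (\<Sum>s\<in>S. F.mu r t s * Zf s)"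
definition EZ2 where "EZ2 r t = (\<Sum>s\<in>S. F.mu r t s * (Zf s)^2)"

lemma EZ_m1: "EZ r t = (\<Sum>x<n. m1 r t x)"
proof -
  have "EZ r t = (\<Sum>s\<in>S. \<Sum>x<n. F.mu r t s * ind (\<not> s x))"
    unfolding EZ_def Zf_def by (simp add: sum_distrib_left)
  also have "\<dots> = (\<Sum>x<n. \<Sum>s\<in>S. F.mu r t s * ind (\<not> s x))" by (rule sum.swap)
  finally show ?thesis unfolding m1_def .
qed

lemma ind_and: "ind p * ind q = ind (p \<and> q)" by (auto simp: ind_def)

lemma EZ2_m2: "EZ2 r t = (\<Sum>x<n. \<Sum>y<n. m2 r t x y)"
proof -
  have sq: "(Zf s)^2 = (\<Sum>x<n. \<Sum>y<n. ind (\<not> s x \<and> \<not> s y))" for s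
    unfolding Zf_def power2_eq_square sum_product ind_and ..
  have "EZ2 r t = (\<Sum>s\<in>S. \<Sum>x<n. \<Sum>y<n. F.mu r t s * ind (\<not> s x \<and> \<not> s y))"
    unfolding EZ2_def sq by (simp add: sum_distrib_left)
  also have "\<dots> = (\<Sum>x<n. \<Sum>s\<in>S. \<Sum>y<n. F.mu r t s * ind (\<not> s x \<and> \<not> s y))" by (rule sum.swap)
  also have "\<dots> = (\<Sum>x<n. \<Sum>y<n. \<Sum>s\<in>S. F.mu r t s * ind (\<not> s x \<and> \<not> s y))"
    by (rule sum.cong[OF refl], rule sum.swap)
  finally show ?thesis unfolding m2_def .
qed

lemma EZ_upper: assumes r: "r \<in> S" shows "EZ r t \<le> n * ((1 - ap / n)^t + kap / ap)"
proof -
  have "EZ r t \<le> (\<Sum>x<n. (1 - ap / n)^t + kap / ap)"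
    unfolding EZ_m1 by (rule sum_mono) (use m1_upper[OF r] in auto)
  then show ?thesis by simp
qed

lemma EZ_lower: "EZ (\<lambda>_. False) t \<ge> n * (1 - 1 / n)^t"
proof -
  have "EZ (\<lambda>_. False) t \<ge> (\<Sum>x<n. (1 - 1 / n)^t)"
    unfolding EZ_m1 by (rule sum_mono) (use m1_lower in auto)
  then show ?thesis by simp
qed

lemma EZ2_upper: assumes r: "r \<in> S"
  shows "EZ2 r t \<le> EZ r t + n * n * ((1 - 2 * ap / n)^t + kap / ap)"
proof -
  let ?B = "(1 - 2 * ap / n)^t + kap / ap"
  have B0: "0 \<le> ?B" using ap_le ap_ge n3 kap_pos by (intro add_nonneg_nonneg divide_nonneg_nonneg zero_le_power) (auto simp: field_simps)
  have row: "(\<Sum>y<n. m2 r t x y) \<le> m1 r t x + n * ?B" if x: "x < n" for x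
  proof -
    have "(\<Sum>y<n. m2 r t x y) = m2 r t x x + (\<Sum>y\<in>{..<n}-{x}. m2 r t x y)"
      using x by (subst sum.remove[of _ x]) auto
    also have "m2 r t x x = m1 r t x" unfolding m1_def m2_def by simp
    also have "(\<Sum>y\<in>{..<n}-{x}. m2 r t x y) \<le> (\<Sum>y\<in>{..<n}-{x}. ?B)"
      by (rule sum_mono) (use m2_upper[OF r x] in auto)
    also have "\<dots> = (n - 1) * ?B" using x by simp
    also have "\<dots> \<le> n * ?B" using B0 by (intro mult_right_mono) auto
    finally show ?thesis by simp
  qed
  have "EZ2 r t \<le> (\<Sum>x<n. m1 r t x + n * ?B)" unfolding EZ2_m2 by (rule sum_mono) (use row in auto)
  also have "\<dots> = EZ r t + n * (n * ?B)" unfolding EZ_m1 by (simp add: sum.distrib)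
  finally show ?thesis by (simp add: mult.assoc)
qed

lemma nkap: "(real n)^2 * kap \<le> ap"
proof -
  have "(2 * real n) * (2 * real n) \<le> (3 * (real n - 1)) * (3 * (real n - 1))" by (rule mult_mono) (use n3 in auto)
  then have h: "4 * (real n)^2 \<le> 9 * (real n - 1)^2" by (simp add: power2_eq_square algebra_simps)
  have pos: "0 < (real n - 1)^2" using n3 by simp
  have "(real n)^2 * kap \<le> (real n)^2 * (1 / (4 * (real n - 1)^2))"
    using kap_small by (intro mult_left_mono) auto
  also have "\<dots> \<le> 9/16" using h pos by (simp add: field_simps)
  finally show ?thesis using ap_ge by linarith
qed

lemma nkap2: "n * kap / ap \<le> 1 / n"
  using nkap n_pos ap_ge by (simp add: field_simps power2_eq_square)

lemma nkap3: "n * n * (kap / ap) \<le> 1"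
  using nkap n_pos ap_ge by (simp add: field_simps power2_eq_square)

end

context sis begin

interpretation F: fmc PP S by (rule fmc_inst)

lemma ln_n: "1 \<le> ln (real n)"
proof -
  have "exp 1 \<le> real n" using exp_le n3 by linarith
  then show ?thesis using n_pos by (simp add: ln_ge_iff)
qed

lemma sqrt_exp: "exp (ln (real n) / 2) = sqrt (real n)"
proof -
  have "exp (ln (sqrt (real n))) = sqrt (real n)" using n_pos by simp
  then show ?thesis using n_pos by (simp add: ln_sqrt)
qed

lemma up_pow:
  assumes T: "2 * real n * ln (real n) \<le> real T"
  shows "n * (1 - ap / n)^T \<le> 1 / sqrt (real n)"
proof -
  let ?L = "ln (real n)"
  have "(1 - ap / n)^T \<le> exp (- (ap / n))^T"
    using exp_ge_add_one_self[of "- (ap / n)"] ap_le n3 by (intro power_mono) (auto simp: field_simps)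
  also have "\<dots> = exp (real T * (- (ap / n)))" by (rule exp_of_nat_mult[symmetric])
  also have "\<dots> \<le> exp (- (3/2) * ?L)"
  proof -
    have "real T * (ap / n) \<ge> (2 * real n * ?L) * (ap / n)"
      using T ap_ge by (intro mult_right_mono) auto
    also have "(2 * real n * ?L) * (ap / n) = 2 * ap * ?L" using n_pos by (simp add: field_simps)
    finally have "real T * (ap / n) \<ge> 2 * ap * ?L" .
    moreover have "2 * ap * ?L \<ge> (3/2) * ?L" using ap_ge ln_n by (intro mult_right_mono) auto
    moreover have "real T * (- (ap / n)) = - (real T * (ap/n))" by simp
    ultimately have "real T * (- (ap / n)) \<le> - (3/2) * ?L" by linarith
    then show ?thesis by (rule exp_mono)
  qed
  also have "exp (- (3/2) * ?L) = exp (- ?L) * exp (- (?L / 2))" by (simp flip: exp_add)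
  also have "\<dots> = (1 / n) * (1 / sqrt n)"
    using n_pos sqrt_exp by (simp add: exp_minus field_simps)
  finally have "(1 - ap / n)^T \<le> (1 / n) * (1 / sqrt n)" .
  then have "n * (1 - ap / n)^T \<le> n * ((1 / n) * (1 / sqrt n))" using n_pos by (intro mult_left_mono) auto
  then show ?thesis using n_pos by simp
qed

lemma low_pow:
  assumes t: "real t \<le> (real n - 1) / 2 * ln (real n)"
  shows "n * (1 - 1 / n)^t \<ge> sqrt (real n)"
proof -
  let ?L = "ln (real n)"
  have n1: "0 < real n - 1" using n3 by simp
  have e1: "exp (- (1 / (real n - 1))) \<le> 1 - 1 / n"
  proof -
    have "1 + 1 / (real n - 1) \<le> exp (1 / (real n - 1))" by (rule exp_ge_add_one_self)
    then have "1 / exp (1 / (real n - 1)) \<le> 1 / (1 + 1 / (real n - 1))"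
      using n1 by (intro divide_left_mono) (auto simp: field_simps)
    also have "1 / (1 + 1 / (real n - 1)) = 1 - 1 / n" using n1 n_pos by (simp add: field_simps)
    finally show ?thesis by (simp add: exp_minus field_simps)
  qed
  have "exp (- (?L / 2)) \<le> exp (real t * (- (1 / (real n - 1))))"
  proof -
    have "real t * (1 / (real n - 1)) \<le> ?L / 2" using t n1 by (simp add: field_simps)
    then show ?thesis by simp
  qed
  also have "\<dots> = exp (- (1 / (real n - 1)))^t" by (rule exp_of_nat_mult)
  also have "\<dots> \<le> (1 - 1 / n)^t" using e1 by (intro power_mono) auto
  finally have "exp (- (?L / 2)) \<le> (1 - 1 / n)^t" .
  then have "n * exp (- (?L / 2)) \<le> n * (1 - 1 / n)^t" using n_pos by (intro mult_left_mono) auto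
  moreover have "n * exp (- (?L / 2)) = sqrt n"
    using n_pos sqrt_exp by (simp add: exp_minus field_simps real_div_sqrt)
  ultimately show ?thesis by simp
qed

end

context sis begin

interpretation F: fmc PP S by (rule fmc_inst)

definition TT :: nat where "TT = nat \<lceil>2 * real n * ln (real n)\<rceil>"
definition eta :: real where "eta = 1 / sqrt (real n) + 4 / real n"

lemma TT_ge: "2 * real n * ln (real n) \<le> real TT"
  unfolding TT_def by linarith

lemma TT_le: "real TT \<le> 2 * real n * ln (real n) * (1 + 2 / real n)"
proof -
  have "0 \<le> 2 * real n * ln (real n)" using n_pos ln_n by simp
  then have "real TT \<le> 2 * real n * ln (real n) + 1" unfolding TT_def by linarith
  also have "\<dots> \<le> 2 * real n * ln (real n) + 4 * ln (real n)" using ln_n by simp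
  also have "\<dots> = 2 * real n * ln (real n) * (1 + 2 / real n)" using n_pos by (simp add: field_simps)
  finally show ?thesis .
qed

lemma sqrt_n_ge1: "1 \<le> sqrt (real n)" using n3 by simp

lemma full_mass: "r \<in> S \<Longrightarrow> F.mu r t full = 1 - (\<Sum>s\<in>S-{full}. F.mu r t s)"
  using sum.remove[OF finite_states full_state, of "F.mu r t"] F.mu_sum[of r t] by simp

lemma EZ_T: "r \<in> S \<Longrightarrow> EZ r TT \<le> 1 / sqrt (real n) + 1 / n"
proof -
  assume r: "r \<in> S"
  have "EZ r TT \<le> n * ((1 - ap / n)^TT + kap / ap)" by (rule EZ_upper[OF r])
  also have "\<dots> = n * (1 - ap / n)^TT + n * kap / ap" by (simp add: algebra_simps)
  also have "\<dots> \<le> 1 / sqrt (real n) + 1 / n" using up_pow[OF TT_ge] nkap2 by linarith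
  finally show ?thesis .
qed

lemma massA_le_EZ: "r \<in> S \<Longrightarrow> (\<Sum>s\<in>S-{full}. F.mu r t s) \<le> EZ r t"
  unfolding EZ_def
  by (rule mass_le_exp[OF finite_states full_state]) (auto simp: F.mu_nonneg Zf_full Zf_ge1)

lemma minor:
  assumes r: "r \<in> S"
  shows "1 - eta \<le> F.mu r TT full"
proof -
  have "F.mu r TT full \<ge> 1 - EZ r TT" using full_mass[OF r] massA_le_EZ[OF r] by simp
  moreover have "1 / sqrt (real n) + 1 / n \<le> eta" unfolding eta_def using n_pos
    by (intro add_left_mono divide_right_mono) auto
  ultimately show ?thesis using EZ_T[OF r] by linarith
qed

lemma stat_ok:
  assumes "eta < 1"
  shows "is_stationary PP S (stat_dist PP S)"
  by (rule F.stat_dist_ok[OF full_state, of "1 - eta" TT]) (use assms minor in auto)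

lemma pi_bounds:
  assumes st: "is_stationary PP S \<pi>"
  shows "(\<Sum>s\<in>S-{full}. \<pi> s) \<le> 1 / n"
proof -
  have pn: "\<And>s. s \<in> S \<Longrightarrow> 0 \<le> \<pi> s" and ps: "(\<Sum>s\<in>S. \<pi> s) = 1"
    using st unfolding is_stationary_def by simp_all
  have pm: "(\<Sum>s\<in>S. \<pi> s * ind (\<not> s x)) \<le> kap / ap" if x: "x < n" for x
  proof -
    let ?m = "(\<Sum>s\<in>S. \<pi> s * ind (\<not> s x))"
    have "?m = (\<Sum>q\<in>S. \<pi> q * (\<Sum>s\<in>S. PP q s * ind (\<not> s x)))" by (rule F.stat_exp[OF st])
    also have "\<dots> \<le> (\<Sum>q\<in>S. \<pi> q * ((1 - ap / n) * ind (\<not> q x) + kap / n))"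
      by (rule sum_mono, rule mult_left_mono) (use P1(1)[OF _ x] pn in auto)
    also have "\<dots> = (1 - ap / n) * ?m + kap / n * (\<Sum>q\<in>S. \<pi> q)" by (rule lin_sum)
    finally have "?m \<le> (1 - ap / n) * ?m + kap / n" using ps by simp
    then have "(ap / n) * ?m \<le> kap / n" by (simp add: algebra_simps)
    then have "ap * ?m \<le> kap" using n_pos by (simp add: field_simps)
    then show ?thesis using ap_ge by (simp add: field_simps mult.commute)
  qed
  have "(\<Sum>s\<in>S-{full}. \<pi> s) \<le> (\<Sum>s\<in>S. \<pi> s * Zf s)"
    by (rule mass_le_exp[OF finite_states full_state]) (auto simp: pn Zf_full Zf_ge1)
  also have "\<dots> = (\<Sum>x<n. \<Sum>s\<in>S. \<pi> s * ind (\<not> s x))"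
  proof -
    have "(\<Sum>s\<in>S. \<pi> s * Zf s) = (\<Sum>s\<in>S. \<Sum>x<n. \<pi> s * ind (\<not> s x))"
      unfolding Zf_def by (simp add: sum_distrib_left)
    also have "\<dots> = (\<Sum>x<n. \<Sum>s\<in>S. \<pi> s * ind (\<not> s x))" by (rule sum.swap)
    finally show ?thesis .
  qed
  also have "\<dots> \<le> (\<Sum>x<n. kap / ap)" by (rule sum_mono) (use pm in auto)
  also have "\<dots> = n * kap / ap" by simp
  also have "\<dots> \<le> 1 / n" by (rule nkap2)
  finally show ?thesis .
qed

lemma tv_upper_T:
  assumes st: "is_stationary PP S \<pi>" and r: "r \<in> S"
  shows "tv_dist S (F.mu r TT) \<pi> \<le> eta"
proof -
  have pn: "\<And>s. s \<in> S \<Longrightarrow> 0 \<le> \<pi> s" and ps: "(\<Sum>s\<in>S. \<pi> s) = 1"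
    using st unfolding is_stationary_def by simp_all
  have "tv_dist S (F.mu r TT) \<pi> \<le> (\<Sum>s\<in>S-{full}. F.mu r TT s) + (\<Sum>s\<in>S-{full}. \<pi> s)"
    by (rule tv_bounds(1)[OF finite_states full_state F.mu_sum[OF r] ps]) (auto simp: F.mu_nonneg[OF r] pn)
  also have "\<dots> \<le> (1 / sqrt (real n) + 1 / n) + 1 / n"
    using massA_le_EZ[OF r, of TT] EZ_T[OF r] pi_bounds[OF st] by linarith
  also have "\<dots> \<le> eta" unfolding eta_def using n_pos by (simp add: field_simps)
  finally show ?thesis .
qed

lemma massA_lower:
  assumes t: "real t \<le> (real n - 1) / 2 * ln (real n)"
  shows "(\<Sum>s\<in>S-{full}. F.mu (\<lambda>_. False) t s) \<ge> 1 - 1 / sqrt (real n) - 1 / n"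
proof -
  let ?z = "\<lambda>_::nat. False"
  let ?E = "EZ ?z t" and ?A = "(\<Sum>s\<in>S-{full}. F.mu ?z t s)"
  let ?e = "n * (1 - 1 / n)^t"
  have e0: "0 \<le> ?e" using n3 by simp
  have eE: "?e \<le> ?E" by (rule EZ_lower)
  have Esq: "sqrt n \<le> ?E" using low_pow[OF t] eE by linarith
  have E1: "1 \<le> ?E" using Esq sqrt_n_ge1 by linarith
  have cs: "?E^2 \<le> EZ2 ?z t * ?A"
    unfolding EZ_def EZ2_def
    by (rule second_moment[OF finite_states full_state]) (auto simp: F.mu_nonneg[OF zero_state] Zf_full)
  have pw: "(1 - 2 * ap / n)^t \<le> ((1 - 1 / n)^2)^t"
  proof (rule power_mono)
    have "1 / (real n)^2 \<le> 1 / (2 * n)" using n3 by (intro divide_left_mono) (auto simp: power2_eq_square)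
    then have "ap \<ge> 1 - 1 / (2 * n)" using ap_big by linarith
    then have apu: "ap \<ge> 1 - (1 / n) / 2" by simp
    define u where "u = 1 / real n"
    have u0: "0 \<le> u" unfolding u_def by simp
    have "2*u*(1 - u/2) \<le> 2*u*ap" using apu u0 unfolding u_def[symmetric] by (intro mult_left_mono) auto
    then have h1: "2*u - u*u \<le> 2*u*ap" by (simp add: algebra_simps)
    have h2: "2*ap/n = 2*u*ap" by (simp add: u_def)
    have h3: "(1 - 1/n)^2 = 1 - 2*u + u*u" by (simp add: u_def power2_eq_square algebra_simps)
    show "1 - 2 * ap / n \<le> (1 - 1 / n)^2" using h1 h2 h3 by linarith
    show "0 \<le> 1 - 2 * ap / n" using ap_le n3 by (simp add: field_simps)
  qed
  have "EZ2 ?z t \<le> ?E + n * n * ((1 - 2 * ap / n)^t + kap / ap)" by (rule EZ2_upper[OF zero_state])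
  also have "\<dots> = ?E + n * n * (1 - 2 * ap / n)^t + n * n * (kap / ap)" by (simp add: algebra_simps)
  also have "\<dots> \<le> ?E + ?e^2 + 1"
  proof -
    have "n * n * (1 - 2 * ap / n)^t \<le> n * n * ((1 - 1 / n)^2)^t" using pw by (intro mult_left_mono) auto
    also have "\<dots> = ?e^2" by (simp add: power_mult_distrib power2_eq_square power_mult[symmetric] mult.commute)
    finally show ?thesis using nkap3 by linarith
  qed
  also have "\<dots> \<le> ?E + ?E^2 + 1" using eE e0 by (simp add: power_mono)
  finally have E2: "EZ2 ?z t \<le> ?E^2 + ?E + 1" by simp
  have A0: "0 \<le> ?A" by (rule sum_nonneg) (auto simp: F.mu_nonneg[OF zero_state])
  have "?E^2 \<le> (?E^2 + ?E + 1) * ?A" using cs E2 A0 by (meson mult_right_mono order_trans)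
  moreover have "(?E^2 + ?E + 1) * (1 - 1 / ?E - 1 / ?E^2) \<le> ?E^2"
  proof -
    have "(?E^2 + ?E + 1) * (1 - 1 / ?E - 1 / ?E^2) = ?E^2 - 1 - 2 / ?E - 1 / ?E^2"
      using E1 by (simp add: field_simps power2_eq_square)
    moreover have "0 \<le> 2 / ?E + 1 / ?E^2" using E1 by simp
    ultimately show ?thesis by linarith
  qed
  ultimately have "(?E^2 + ?E + 1) * (1 - 1 / ?E - 1 / ?E^2) \<le> (?E^2 + ?E + 1) * ?A" by linarith
  moreover have "0 < ?E^2 + ?E + 1" using E1 by (simp add: add_pos_pos)
  ultimately have w: "1 - 1 / ?E - 1 / ?E^2 \<le> ?A" by (simp add: mult_le_cancel_left_pos)
  have "1 / ?E \<le> 1 / sqrt n" using Esq sqrt_n_ge1 E1 by (intro divide_left_mono mult_pos_pos) auto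
  moreover have "1 / ?E^2 \<le> 1 / n"
  proof -
    have "(sqrt n)^2 \<le> ?E^2" using Esq sqrt_n_ge1 by (intro power_mono) auto
    then have "n \<le> ?E^2" by simp
    then show ?thesis using n_pos E1 by (intro divide_left_mono mult_pos_pos) auto
  qed
  ultimately show ?thesis using w by linarith
qed

lemma tv_lower:
  assumes st: "is_stationary PP S \<pi>" and t: "real t \<le> (real n - 1) / 2 * ln (real n)"
  shows "tv_dist S (F.mu (\<lambda>_. False) t) \<pi> \<ge> 1 - eta"
proof -
  have pn: "\<And>s. s \<in> S \<Longrightarrow> 0 \<le> \<pi> s" and ps: "(\<Sum>s\<in>S. \<pi> s) = 1"
    using st unfolding is_stationary_def by simp_all
  have "tv_dist S (F.mu (\<lambda>_. False) t) \<pi> \<ge> (\<Sum>s\<in>S-{full}. F.mu (\<lambda>_. False) t s) - (\<Sum>s\<in>S-{full}. \<pi> s)"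
    by (rule tv_bounds(2)[OF finite_states full_state F.mu_sum[OF zero_state] ps])
       (auto simp: F.mu_nonneg[OF zero_state] pn)
  moreover have "2 / real n \<le> 4 / real n" using n_pos by (intro divide_right_mono) auto
  then have "1 - eta \<le> (1 - 1 / sqrt (real n) - 1 / n) - 1 / n" unfolding eta_def by simp
  ultimately show ?thesis using massA_lower[OF t] pi_bounds[OF st] by linarith
qed

lemma mix_bounds:
  assumes e1: "eta < \<epsilon>" and e2: "eta < 1 - \<epsilon>"
  shows "real n / 2 * ln (real n) * (1 - 2 / real n) \<le> real (sis_mix d n f a lam kap \<epsilon>)
      \<and> real (sis_mix d n f a lam kap \<epsilon>) \<le> 2 * real n * ln (real n) * (1 + 2 / real n)"
proof -
  have eta1: "eta < 1" using e1 e2 by linarith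
  define \<pi> where "\<pi> = stat_dist PP S"
  have st: "is_stationary PP S \<pi>" unfolding \<pi>_def by (rule stat_ok[OF eta1])
  have ne: "S \<noteq> {}" using full_state by auto
  have wd_def': "worst_dist PP S t = Max ((\<lambda>s0. tv_dist S (F.mu s0 t) \<pi>) ` S)" for t
    unfolding worst_dist_def \<pi>_def ..
  have wT: "worst_dist PP S TT \<le> \<epsilon>"
    unfolding wd_def' using tv_upper_T[OF st] e1 finite_states ne
    by (subst Max_le_iff) force+
  have wl: "worst_dist PP S t > \<epsilon>" if t: "real t \<le> (real n - 1) / 2 * ln (real n)" for t
  proof -
    have "tv_dist S (F.mu (\<lambda>_. False) t) \<pi> \<le> worst_dist PP S t"
      unfolding wd_def' using finite_states zero_state by (intro Max_ge) auto
    then show ?thesis using tv_lower[OF st t] e2 by linarith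
  qed
  define M where "M = sis_mix d n f a lam kap \<epsilon>"
  have Mdef: "M = Inf {t. worst_dist PP S t \<le> \<epsilon>}" unfolding M_def sis_mix_def mix_time_def ..
  have inset: "TT \<in> {t. worst_dist PP S t \<le> \<epsilon>}" using wT by simp
  have up: "M \<le> TT" unfolding Mdef using inset by (rule cInf_lower) simp
  have Min: "M \<in> {t. worst_dist PP S t \<le> \<epsilon>}" unfolding Mdef using inset by (intro Inf_nat_def1) auto
  have low: "real n / 2 * ln (real n) * (1 - 2 / real n) \<le> real M"
  proof (rule ccontr)
    assume "\<not> ?thesis"
    then have "real M < real n / 2 * ln (real n) * (1 - 2 / real n)" by simp
    also have "\<dots> = (real n - 2) / 2 * ln (real n)" using n_pos by (simp add: field_simps)
    also have "\<dots> \<le> (real n - 1) / 2 * ln (real n)" using ln_n by (intro mult_right_mono) auto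
    finally have "worst_dist PP S M > \<epsilon>" using wl by simp
    then show False using Min by simp
  qed
  have "real M \<le> real TT" using up by simp
  then show ?thesis using low TT_le unfolding M_def by linarith
qed

lemma mix_bounds':
  assumes e1: "1 / sqrt (real n) + 4 / real n < \<epsilon>" and e2: "1 / sqrt (real n) + 4 / real n < 1 - \<epsilon>"
  shows "real n / 2 * ln (real n) * (1 - 2 / real n) \<le> real (sis_mix d n f a lam kap \<epsilon>)
      \<and> real (sis_mix d n f a lam kap \<epsilon>) \<le> 2 * real n * ln (real n) * (1 + 2 / real n)"
  by (rule mix_bounds) (use e1 e2 in \<open>simp_all add: eta_def\<close>)

end

theorem mainTheorem7:
  fixes d :: nat and a lam kap :: "nat \<Rightarrow> real" and \<alpha> :: real
  assumes alpha: "\<alpha> > 1"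
    and regime: "\<And>n. n \<ge> 2 \<Longrightarrow>
        0 < kap n \<and> kap n < 1 / (4 * (real n - 1)^2)
        \<and> a n > 1 - 1 / real n powr \<alpha> \<and> 1 - 1 / real n powr \<alpha> > 1 - kap n \<and> 1 - kap n > 1/2
        \<and> 0 < lam n \<and> lam n \<le> 1 / (real d * real n powr \<alpha>)"
  shows "\<forall>\<epsilon>. 0 < \<epsilon> \<and> \<epsilon> < 1 \<longrightarrow>
    (\<exists>\<delta> :: nat \<Rightarrow> real. \<delta> \<longlonglongrightarrow> 0 \<and>
      (\<forall>\<epsilon>'>0. \<forall>\<^sub>F n in sequentially. even (d * n) \<longrightarrow>
        measure_pmf.prob (config_model d n)
          {f. real n / 2 * ln (real n) * (1 - \<delta> n) \<le> real (sis_mix d n f (a n) (lam n) (kap n) \<epsilon>)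
              \<and> real (sis_mix d n f (a n) (lam n) (kap n) \<epsilon>) \<le> 2 * real n * ln (real n) * (1 + \<delta> n)}
        \<ge> 1 - \<epsilon>'))"
proof (intro allI impI)
  fix \<epsilon> :: real assume eps: "0 < \<epsilon> \<and> \<epsilon> < 1"
  have a2: "\<alpha> > 2"
  proof -
    have r2: "kap 2 < 1 / (4 * (real 2 - 1)^2)" "1 - 1 / real 2 powr \<alpha> > 1 - kap 2"
      using regime[of 2] by auto
    have k1: "kap 2 < 1/4" using r2(1) by simp
    have k2: "1 / 2 powr \<alpha> < kap 2" using r2(2) by simp
    have h: "1 / 2 powr \<alpha> < 1 / 4" using k1 k2 by linarith
    have p0: "0 < (2::real) powr \<alpha>" by simp
    have "4 < (2::real) powr \<alpha>" using h p0 by (simp add: field_simps)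
    moreover have "(2::real) powr 2 = 4" by simp
    ultimately have "2 powr 2 < (2::real) powr \<alpha>" by simp
    then show ?thesis using powr_less_cancel_iff[of "2::real" 2 \<alpha>] by simp
  qed
  have sis_n: "sis n (a n) (lam n) (kap n)" if n: "n \<ge> 3" for n :: nat
  proof -
    have r: "0 < kap n" "kap n < 1 / (4 * (real n - 1)^2)" "a n > 1 - 1 / real n powr \<alpha>" "0 < lam n"
      using regime[of n] n by auto
    have "real n powr 2 \<le> real n powr \<alpha>" using a2 n by (intro powr_mono) auto
    then have "(real n)^2 \<le> real n powr \<alpha>" using n by (simp add: powr_realpow)
    then have "1 / real n powr \<alpha> \<le> 1 / (real n)^2" using n by (intro divide_left_mono) auto
    then show ?thesis using r n by unfold_locales auto
  qed
  show "\<exists>\<delta> :: nat \<Rightarrow> real. \<delta> \<longlonglongrightarrow> 0 \<and>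
      (\<forall>\<epsilon>'>0. \<forall>\<^sub>F n in sequentially. even (d * n) \<longrightarrow>
        measure_pmf.prob (config_model d n)
          {f. real n / 2 * ln (real n) * (1 - \<delta> n) \<le> real (sis_mix d n f (a n) (lam n) (kap n) \<epsilon>)
              \<and> real (sis_mix d n f (a n) (lam n) (kap n) \<epsilon>) \<le> 2 * real n * ln (real n) * (1 + \<delta> n)}
        \<ge> 1 - \<epsilon>')"
  proof (intro exI[of _ "\<lambda>n. 2 / real n"] conjI allI impI)
    show "(\<lambda>n. 2 / real n) \<longlonglongrightarrow> 0" by real_asymp
    fix \<epsilon>' :: real assume "\<epsilon>' > 0"
    have lim: "(\<lambda>n. 1 / sqrt (real n) + 4 / real n) \<longlonglongrightarrow> 0" by real_asymp
    have m: "0 < min \<epsilon> (1 - \<epsilon>)" using eps by simp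
    have ev: "\<forall>\<^sub>F n in sequentially. 1 / sqrt (real n) + 4 / real n < min \<epsilon> (1 - \<epsilon>)"
      using order_tendstoD(2)[OF lim m] .
    show "\<forall>\<^sub>F n in sequentially. even (d * n) \<longrightarrow>
        measure_pmf.prob (config_model d n)
          {f. real n / 2 * ln (real n) * (1 - 2 / real n) \<le> real (sis_mix d n f (a n) (lam n) (kap n) \<epsilon>)
              \<and> real (sis_mix d n f (a n) (lam n) (kap n) \<epsilon>) \<le> 2 * real n * ln (real n) * (1 + 2 / real n)}
        \<ge> 1 - \<epsilon>'"
      using ev eventually_ge_at_top[of 3]
    proof eventually_elim
      case (elim n)
      have "{f. real n / 2 * ln (real n) * (1 - 2 / real n) \<le> real (sis_mix d n f (a n) (lam n) (kap n) \<epsilon>)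
              \<and> real (sis_mix d n f (a n) (lam n) (kap n) \<epsilon>) \<le> 2 * real n * ln (real n) * (1 + 2 / real n)} = UNIV"
        using sis.mix_bounds'[OF sis_n[OF elim(2)]] elim(1) by auto
      then show ?case using \<open>\<epsilon>' > 0\<close> by (simp add: measure_pmf.prob_space)
    qed
  qed
qed


end
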